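(* Let $\tau=(1+\sqrt5)/2$, let $\kappa\ge 0$, let $\mathcal{D}_1,\mathcal{D}_2,\mathcal{D}_3$ be the Dunkl operators of the icosahedral root system with parameter $\kappa$, and let $\mathcal{I}$ be the vertex set of the icosahedron, all as described in the context. For $y_0\in\mathcal{I}$ let $F(r,x;y_0)=\left(1-r\langle x,y_0\rangle\right)^{-1}\prod_{y\in\mathcal{I}}\left(1-r\langle x,y\rangle\right)^{-\kappa}$, regarded as a power series in $r$ whose coefficients are polynomials in $x\in\mathbb{R}^3$, with Dunkl operators applied coefficientwise. Then for every $u\in\mathbb{R}^3$ and every $y_0\in\mathcal{I}$, \[ \langle u,\nabla_\kappa\rangle F(r,x;y_0)=\langle u,y_0\rangle\left(\left(r^2\frac{\partial}{\partial r}+r(1+11\kappa)\right)F(r,x;y_0)-\kappa r\,F(-r,x;y_0)\right), \] where $\langle u,\nabla_\kappa\rangle=\sum_{i=1}^3u_i\mathcal{D}_i$.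
   Context: Let $\tau=(1+\sqrt5)/2$ (so $\tau^2=\tau+1$). Vectors in $\mathbb{R}^3$ are row vectors; $\langle x,y\rangle=\sum x_iy_i$, $|x|^2=\langle x,x\rangle$. For $v\neq0$ the reflection $\sigma_v$ is $x\sigma_v=x-2\frac{\langle x,v\rangle}{|v|^2}v$. The positive roots of type $H_3$ are the 15 vectors $R_+=\{(2,0,0),(0,2,0),(0,0,2),(\tau,\pm\tau^{-1},\pm1),(\pm1,\tau,\pm\tau^{-1}),(\tau^{-1},\pm1,\tau),(-\tau^{-1},1,\tau),(\tau^{-1},1,-\tau)\}$ (signs chosen independently). With a real parameter $\kappa\ge0$, the Dunkl operators are $\mathcal{D}_if(x)=\frac{\partial f}{\partial x_i}(x)+\kappa\sum_{v\in R_+}\frac{f(x)-f(x\sigma_v)}{\langle x,v\rangle}v_i$, $i=1,2,3$. The icosahedron vertex set is $\mathcal{I}=\{(0,\pm\tau,\pm1),(\pm1,0,\pm\tau),(\pm\tau,\pm1,0)\}$ (12 points). *)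

theory Defs
  imports "HOL-Analysis.Analysis" "HOL-Computational_Algebra.Formal_Power_Series"
begin

text \<open>Points of R^3 are modelled as real^3 (index type 3, indices 1,2,3);
  the inner product is the standard one.\<close>

definition vec3 :: "real \<Rightarrow> real \<Rightarrow> real \<Rightarrow> real^3" where
  "vec3 a b c = (\<chi> i. if i = 1 then a else if i = 2 then b else c)"

definition tau :: real where
  "tau = (1 + sqrt 5) / 2"

definition refl :: "real^3 \<Rightarrow> real^3 \<Rightarrow> real^3" where
  "refl v x = x - (2 * inner x v / (norm v)\<^sup>2) *\<^sub>R v"

definition Rplus :: "(real^3) set" where
  "Rplus = {vec3 2 0 0, vec3 0 2 0, vec3 0 0 2}
     \<union> {vec3 tau (s * inverse tau) t | s t. s \<in> {1, -1} \<and> t \<in> {1, -1}}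
     \<union> {vec3 s tau (t * inverse tau) | s t. s \<in> {1, -1} \<and> t \<in> {1, -1}}
     \<union> {vec3 (inverse tau) s tau | s. s \<in> {1, -1}}
     \<union> {vec3 (- inverse tau) 1 tau, vec3 (inverse tau) 1 (- tau)}"

definition Ico :: "(real^3) set" where
  "Ico = {vec3 0 (s * tau) t | s t. s \<in> {1, -1} \<and> t \<in> {1, -1}}
     \<union> {vec3 s 0 (t * tau) | s t. s \<in> {1, -1} \<and> t \<in> {1, -1}}
     \<union> {vec3 (s * tau) t 0 | s t. s \<in> {1, -1} \<and> t \<in> {1, -1}}"

definition partial :: "3 \<Rightarrow> (real^3 \<Rightarrow> real) \<Rightarrow> real^3 \<Rightarrow> real" where
  "partial i f x = deriv (\<lambda>t. f (x + t *\<^sub>R axis i 1)) 0"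

text \<open>Dunkl operator D_i with parameter kappa.  The difference quotient is only
  meaningful off the reflecting hyperplanes; see the theorem's hypothesis.\<close>
definition Dunkl :: "real \<Rightarrow> 3 \<Rightarrow> (real^3 \<Rightarrow> real) \<Rightarrow> real^3 \<Rightarrow> real" where
  "Dunkl \<kappa> i f x = partial i f x
     + \<kappa> * (\<Sum>v\<in>Rplus. (f x - f (refl v x)) / inner x v * v $ i)"

text \<open>The formal power series (in r) (1 - c r)^(-a), via the binomial series.\<close>
definition binom_series :: "real \<Rightarrow> real \<Rightarrow> real fps" where
  "binom_series a c = fps_binomial (- a) oo (fps_const (- c) * fps_X)"

definition Fser :: "real \<Rightarrow> real^3 \<Rightarrow> real^3 \<Rightarrow> real fps" where
  "Fser \<kappa> y0 x = inverse (1 - fps_const (inner x y0) * fps_X)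
      * (\<Prod>y\<in>Ico. binom_series \<kappa> (inner x y))"

end

theory Submission
  imports Defs
begin

lemma tau_sq: "tau * tau = tau + 1" unfolding tau_def by (simp add: field_simps) 
lemma tau_pos: "tau > 1" unfolding tau_def
proof -
  have "sqrt 5 > 1" by simp
  then show "(1 + sqrt 5) / 2 > 1" by simp
qed
lemma tau_lt2: "tau < 2" unfolding tau_def
proof -
  have "sqrt 5 < 3" by (rule real_less_lsqrt) auto
  then show "(1 + sqrt 5) / 2 < 2" by simp
qed
lemma itau: "inverse tau = tau - 1"
  using tau_sq tau_pos by (simp add: field_simps)
lemma vec3_nth[simp]: "vec3 a b c $ 1 = a" "vec3 a b c $ 2 = b" "vec3 a b c $ 3 = c"
  by (simp_all add: vec3_def)
lemma vec3_eq_iff: "vec3 a b c = vec3 d e f \<longleftrightarrow> a = d \<and> b = e \<and> c = f"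
  by (auto simp: vec_eq_iff forall_3)
lemma inner_vec3: "inner (vec3 a b c) (vec3 d e f) = a*d+b*e+c*f"
  by (simp add: inner_vec_def sum_3)
lemma vec3_diff: "vec3 a b c - k *\<^sub>R vec3 d e f = vec3 (a - k*d) (b - k*e) (c - k*f)"
  by (simp add: vec_eq_iff forall_3)
lemma vec3_uminus: "- vec3 a b c = vec3 (-a) (-b) (-c)"
  by (simp add: vec_eq_iff forall_3)
lemma refl_vec3: "a*a+b*b+c*c = 4 \<Longrightarrow> refl (vec3 a b c) (vec3 d e f) =
   vec3 (d - ((d*a+e*b+f*c)/2)*a) (e - ((d*a+e*b+f*c)/2)*b) (f - ((d*a+e*b+f*c)/2)*c)"
  unfolding refl_def power2_norm_eq_inner inner_vec3 vec3_diff by (simp add: vec3_eq_iff field_simps)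
lemma reflI: "a*a+b*b+c*c = 4 \<Longrightarrow> d - ((d*a+e*b+f*c)/2)*a = d' \<Longrightarrow>
  e - ((d*a+e*b+f*c)/2)*b = e' \<Longrightarrow> f - ((d*a+e*b+f*c)/2)*c = f' \<Longrightarrow>
  refl (vec3 a b c) (vec3 d e f) = vec3 d' e' f'"
  by (simp add: refl_vec3)

lemma reflI2: "a*a+b*b+c*c = 4 \<Longrightarrow> 2*d - (d*a+e*b+f*c)*a = 2*d' \<Longrightarrow>
  2*e - (d*a+e*b+f*c)*b = 2*e' \<Longrightarrow> 2*f - (d*a+e*b+f*c)*c = 2*f' \<Longrightarrow>
  refl (vec3 a b c) (vec3 d e f) = vec3 d' e' f'"
  by (rule reflI) (simp_all add: field_simps)

definition Rlist :: "(real^3) list" where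
  "Rlist = [vec3 2 0 0, vec3 0 2 0, vec3 0 0 2, vec3 tau (inverse tau) 1, vec3 tau (inverse tau) (-1), vec3 tau (- inverse tau) 1, vec3 tau (- inverse tau) (-1), vec3 1 tau (inverse tau), vec3 1 tau (- inverse tau), vec3 (-1) tau (inverse tau), vec3 (-1) tau (- inverse tau), vec3 (inverse tau) 1 tau, vec3 (inverse tau) (-1) tau, vec3 (- inverse tau) 1 tau, vec3 (inverse tau) 1 (- tau)]"

definition Ilist :: "(real^3) list" where
  "Ilist = [vec3 0 tau 1, vec3 0 tau (-1), vec3 0 (- tau) 1, vec3 0 (- tau) (-1), vec3 1 0 tau, vec3 1 0 (- tau), vec3 (-1) 0 tau, vec3 (-1) 0 (- tau), vec3 tau 1 0, vec3 tau (-1) 0, vec3 (- tau) 1 0, vec3 (- tau) (-1) 0]"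

lemma rt_0_0: "refl (vec3 2 0 0) (vec3 0 tau 1) = vec3 0 tau 1"
  by (rule reflI2, (unfold itau)?, ((simp add: algebra_simps; fail) | (use tau_sq in algebra))+)

lemma rt_0_1: "refl (vec3 2 0 0) (vec3 0 tau (-1)) = vec3 0 tau (-1)"
  by (rule reflI2, (unfold itau)?, ((simp add: algebra_simps; fail) | (use tau_sq in algebra))+)

lemma rt_0_2: "refl (vec3 2 0 0) (vec3 0 (- tau) 1) = vec3 0 (- tau) 1"
  by (rule reflI2, (unfold itau)?, ((simp add: algebra_simps; fail) | (use tau_sq in algebra))+)

lemma rt_0_3: "refl (vec3 2 0 0) (vec3 0 (- tau) (-1)) = vec3 0 (- tau) (-1)"
  by (rule reflI2, (unfold itau)?, ((simp add: algebra_simps; fail) | (use tau_sq in algebra))+)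

lemma rt_0_4: "refl (vec3 2 0 0) (vec3 1 0 tau) = vec3 (-1) 0 tau"
  by (rule reflI2, (unfold itau)?, ((simp add: algebra_simps; fail) | (use tau_sq in algebra))+)

lemma rt_0_5: "refl (vec3 2 0 0) (vec3 1 0 (- tau)) = vec3 (-1) 0 (- tau)"
  by (rule reflI2, (unfold itau)?, ((simp add: algebra_simps; fail) | (use tau_sq in algebra))+)

lemma rt_0_6: "refl (vec3 2 0 0) (vec3 (-1) 0 tau) = vec3 1 0 tau"
  by (rule reflI2, (unfold itau)?, ((simp add: algebra_simps; fail) | (use tau_sq in algebra))+)

lemma rt_0_7: "refl (vec3 2 0 0) (vec3 (-1) 0 (- tau)) = vec3 1 0 (- tau)"
  by (rule reflI2, (unfold itau)?, ((simp add: algebra_simps; fail) | (use tau_sq in algebra))+)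

lemma rt_0_8: "refl (vec3 2 0 0) (vec3 tau 1 0) = vec3 (- tau) 1 0"
  by (rule reflI2, (unfold itau)?, ((simp add: algebra_simps; fail) | (use tau_sq in algebra))+)

lemma rt_0_9: "refl (vec3 2 0 0) (vec3 tau (-1) 0) = vec3 (- tau) (-1) 0"
  by (rule reflI2, (unfold itau)?, ((simp add: algebra_simps; fail) | (use tau_sq in algebra))+)

lemma rt_0_10: "refl (vec3 2 0 0) (vec3 (- tau) 1 0) = vec3 tau 1 0"
  by (rule reflI2, (unfold itau)?, ((simp add: algebra_simps; fail) | (use tau_sq in algebra))+)

lemma rt_0_11: "refl (vec3 2 0 0) (vec3 (- tau) (-1) 0) = vec3 tau (-1) 0"
  by (rule reflI2, (unfold itau)?, ((simp add: algebra_simps; fail) | (use tau_sq in algebra))+)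

lemma rt_1_0: "refl (vec3 0 2 0) (vec3 0 tau 1) = vec3 0 (- tau) 1"
  by (rule reflI2, (unfold itau)?, ((simp add: algebra_simps; fail) | (use tau_sq in algebra))+)

lemma rt_1_1: "refl (vec3 0 2 0) (vec3 0 tau (-1)) = vec3 0 (- tau) (-1)"
  by (rule reflI2, (unfold itau)?, ((simp add: algebra_simps; fail) | (use tau_sq in algebra))+)

lemma rt_1_2: "refl (vec3 0 2 0) (vec3 0 (- tau) 1) = vec3 0 tau 1"
  by (rule reflI2, (unfold itau)?, ((simp add: algebra_simps; fail) | (use tau_sq in algebra))+)

lemma rt_1_3: "refl (vec3 0 2 0) (vec3 0 (- tau) (-1)) = vec3 0 tau (-1)"
  by (rule reflI2, (unfold itau)?, ((simp add: algebra_simps; fail) | (use tau_sq in algebra))+)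

lemma rt_1_4: "refl (vec3 0 2 0) (vec3 1 0 tau) = vec3 1 0 tau"
  by (rule reflI2, (unfold itau)?, ((simp add: algebra_simps; fail) | (use tau_sq in algebra))+)

lemma rt_1_5: "refl (vec3 0 2 0) (vec3 1 0 (- tau)) = vec3 1 0 (- tau)"
  by (rule reflI2, (unfold itau)?, ((simp add: algebra_simps; fail) | (use tau_sq in algebra))+)

lemma rt_1_6: "refl (vec3 0 2 0) (vec3 (-1) 0 tau) = vec3 (-1) 0 tau"
  by (rule reflI2, (unfold itau)?, ((simp add: algebra_simps; fail) | (use tau_sq in algebra))+)

lemma rt_1_7: "refl (vec3 0 2 0) (vec3 (-1) 0 (- tau)) = vec3 (-1) 0 (- tau)"
  by (rule reflI2, (unfold itau)?, ((simp add: algebra_simps; fail) | (use tau_sq in algebra))+)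

lemma rt_1_8: "refl (vec3 0 2 0) (vec3 tau 1 0) = vec3 tau (-1) 0"
  by (rule reflI2, (unfold itau)?, ((simp add: algebra_simps; fail) | (use tau_sq in algebra))+)

lemma rt_1_9: "refl (vec3 0 2 0) (vec3 tau (-1) 0) = vec3 tau 1 0"
  by (rule reflI2, (unfold itau)?, ((simp add: algebra_simps; fail) | (use tau_sq in algebra))+)

lemma rt_1_10: "refl (vec3 0 2 0) (vec3 (- tau) 1 0) = vec3 (- tau) (-1) 0"
  by (rule reflI2, (unfold itau)?, ((simp add: algebra_simps; fail) | (use tau_sq in algebra))+)

lemma rt_1_11: "refl (vec3 0 2 0) (vec3 (- tau) (-1) 0) = vec3 (- tau) 1 0"
  by (rule reflI2, (unfold itau)?, ((simp add: algebra_simps; fail) | (use tau_sq in algebra))+)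

lemma rt_2_0: "refl (vec3 0 0 2) (vec3 0 tau 1) = vec3 0 tau (-1)"
  by (rule reflI2, (unfold itau)?, ((simp add: algebra_simps; fail) | (use tau_sq in algebra))+)

lemma rt_2_1: "refl (vec3 0 0 2) (vec3 0 tau (-1)) = vec3 0 tau 1"
  by (rule reflI2, (unfold itau)?, ((simp add: algebra_simps; fail) | (use tau_sq in algebra))+)

lemma rt_2_2: "refl (vec3 0 0 2) (vec3 0 (- tau) 1) = vec3 0 (- tau) (-1)"
  by (rule reflI2, (unfold itau)?, ((simp add: algebra_simps; fail) | (use tau_sq in algebra))+)

lemma rt_2_3: "refl (vec3 0 0 2) (vec3 0 (- tau) (-1)) = vec3 0 (- tau) 1"
  by (rule reflI2, (unfold itau)?, ((simp add: algebra_simps; fail) | (use tau_sq in algebra))+)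

lemma rt_2_4: "refl (vec3 0 0 2) (vec3 1 0 tau) = vec3 1 0 (- tau)"
  by (rule reflI2, (unfold itau)?, ((simp add: algebra_simps; fail) | (use tau_sq in algebra))+)

lemma rt_2_5: "refl (vec3 0 0 2) (vec3 1 0 (- tau)) = vec3 1 0 tau"
  by (rule reflI2, (unfold itau)?, ((simp add: algebra_simps; fail) | (use tau_sq in algebra))+)

lemma rt_2_6: "refl (vec3 0 0 2) (vec3 (-1) 0 tau) = vec3 (-1) 0 (- tau)"
  by (rule reflI2, (unfold itau)?, ((simp add: algebra_simps; fail) | (use tau_sq in algebra))+)

lemma rt_2_7: "refl (vec3 0 0 2) (vec3 (-1) 0 (- tau)) = vec3 (-1) 0 tau"
  by (rule reflI2, (unfold itau)?, ((simp add: algebra_simps; fail) | (use tau_sq in algebra))+)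

lemma rt_2_8: "refl (vec3 0 0 2) (vec3 tau 1 0) = vec3 tau 1 0"
  by (rule reflI2, (unfold itau)?, ((simp add: algebra_simps; fail) | (use tau_sq in algebra))+)

lemma rt_2_9: "refl (vec3 0 0 2) (vec3 tau (-1) 0) = vec3 tau (-1) 0"
  by (rule reflI2, (unfold itau)?, ((simp add: algebra_simps; fail) | (use tau_sq in algebra))+)

lemma rt_2_10: "refl (vec3 0 0 2) (vec3 (- tau) 1 0) = vec3 (- tau) 1 0"
  by (rule reflI2, (unfold itau)?, ((simp add: algebra_simps; fail) | (use tau_sq in algebra))+)

lemma rt_2_11: "refl (vec3 0 0 2) (vec3 (- tau) (-1) 0) = vec3 (- tau) (-1) 0"
  by (rule reflI2, (unfold itau)?, ((simp add: algebra_simps; fail) | (use tau_sq in algebra))+)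

lemma rt_3_0: "refl (vec3 tau (inverse tau) 1) (vec3 0 tau 1) = vec3 (- tau) 1 0"
  by (rule reflI2, (unfold itau)?, ((simp add: algebra_simps; fail) | (use tau_sq in algebra))+)

lemma rt_3_1: "refl (vec3 tau (inverse tau) 1) (vec3 0 tau (-1)) = vec3 0 tau (-1)"
  by (rule reflI2, (unfold itau)?, ((simp add: algebra_simps; fail) | (use tau_sq in algebra))+)

lemma rt_3_2: "refl (vec3 tau (inverse tau) 1) (vec3 0 (- tau) 1) = vec3 0 (- tau) 1"
  by (rule reflI2, (unfold itau)?, ((simp add: algebra_simps; fail) | (use tau_sq in algebra))+)

lemma rt_3_3: "refl (vec3 tau (inverse tau) 1) (vec3 0 (- tau) (-1)) = vec3 tau (-1) 0"
  by (rule reflI2, (unfold itau)?, ((simp add: algebra_simps; fail) | (use tau_sq in algebra))+)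

lemma rt_3_4: "refl (vec3 tau (inverse tau) 1) (vec3 1 0 tau) = vec3 (- tau) (-1) 0"
  by (rule reflI2, (unfold itau)?, ((simp add: algebra_simps; fail) | (use tau_sq in algebra))+)

lemma rt_3_5: "refl (vec3 tau (inverse tau) 1) (vec3 1 0 (- tau)) = vec3 1 0 (- tau)"
  by (rule reflI2, (unfold itau)?, ((simp add: algebra_simps; fail) | (use tau_sq in algebra))+)

lemma rt_3_6: "refl (vec3 tau (inverse tau) 1) (vec3 (-1) 0 tau) = vec3 (-1) 0 tau"
  by (rule reflI2, (unfold itau)?, ((simp add: algebra_simps; fail) | (use tau_sq in algebra))+)

lemma rt_3_7: "refl (vec3 tau (inverse tau) 1) (vec3 (-1) 0 (- tau)) = vec3 tau 1 0"
  by (rule reflI2, (unfold itau)?, ((simp add: algebra_simps; fail) | (use tau_sq in algebra))+)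

lemma rt_3_8: "refl (vec3 tau (inverse tau) 1) (vec3 tau 1 0) = vec3 (-1) 0 (- tau)"
  by (rule reflI2, (unfold itau)?, ((simp add: algebra_simps; fail) | (use tau_sq in algebra))+)

lemma rt_3_9: "refl (vec3 tau (inverse tau) 1) (vec3 tau (-1) 0) = vec3 0 (- tau) (-1)"
  by (rule reflI2, (unfold itau)?, ((simp add: algebra_simps; fail) | (use tau_sq in algebra))+)

lemma rt_3_10: "refl (vec3 tau (inverse tau) 1) (vec3 (- tau) 1 0) = vec3 0 tau 1"
  by (rule reflI2, (unfold itau)?, ((simp add: algebra_simps; fail) | (use tau_sq in algebra))+)

lemma rt_3_11: "refl (vec3 tau (inverse tau) 1) (vec3 (- tau) (-1) 0) = vec3 1 0 tau"
  by (rule reflI2, (unfold itau)?, ((simp add: algebra_simps; fail) | (use tau_sq in algebra))+)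

lemma rt_4_0: "refl (vec3 tau (inverse tau) (-1)) (vec3 0 tau 1) = vec3 0 tau 1"
  by (rule reflI2, (unfold itau)?, ((simp add: algebra_simps; fail) | (use tau_sq in algebra))+)

lemma rt_4_1: "refl (vec3 tau (inverse tau) (-1)) (vec3 0 tau (-1)) = vec3 (- tau) 1 0"
  by (rule reflI2, (unfold itau)?, ((simp add: algebra_simps; fail) | (use tau_sq in algebra))+)

lemma rt_4_2: "refl (vec3 tau (inverse tau) (-1)) (vec3 0 (- tau) 1) = vec3 tau (-1) 0"
  by (rule reflI2, (unfold itau)?, ((simp add: algebra_simps; fail) | (use tau_sq in algebra))+)

lemma rt_4_3: "refl (vec3 tau (inverse tau) (-1)) (vec3 0 (- tau) (-1)) = vec3 0 (- tau) (-1)"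
  by (rule reflI2, (unfold itau)?, ((simp add: algebra_simps; fail) | (use tau_sq in algebra))+)

lemma rt_4_4: "refl (vec3 tau (inverse tau) (-1)) (vec3 1 0 tau) = vec3 1 0 tau"
  by (rule reflI2, (unfold itau)?, ((simp add: algebra_simps; fail) | (use tau_sq in algebra))+)

lemma rt_4_5: "refl (vec3 tau (inverse tau) (-1)) (vec3 1 0 (- tau)) = vec3 (- tau) (-1) 0"
  by (rule reflI2, (unfold itau)?, ((simp add: algebra_simps; fail) | (use tau_sq in algebra))+)

lemma rt_4_6: "refl (vec3 tau (inverse tau) (-1)) (vec3 (-1) 0 tau) = vec3 tau 1 0"
  by (rule reflI2, (unfold itau)?, ((simp add: algebra_simps; fail) | (use tau_sq in algebra))+)

lemma rt_4_7: "refl (vec3 tau (inverse tau) (-1)) (vec3 (-1) 0 (- tau)) = vec3 (-1) 0 (- tau)"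
  by (rule reflI2, (unfold itau)?, ((simp add: algebra_simps; fail) | (use tau_sq in algebra))+)

lemma rt_4_8: "refl (vec3 tau (inverse tau) (-1)) (vec3 tau 1 0) = vec3 (-1) 0 tau"
  by (rule reflI2, (unfold itau)?, ((simp add: algebra_simps; fail) | (use tau_sq in algebra))+)

lemma rt_4_9: "refl (vec3 tau (inverse tau) (-1)) (vec3 tau (-1) 0) = vec3 0 (- tau) 1"
  by (rule reflI2, (unfold itau)?, ((simp add: algebra_simps; fail) | (use tau_sq in algebra))+)

lemma rt_4_10: "refl (vec3 tau (inverse tau) (-1)) (vec3 (- tau) 1 0) = vec3 0 tau (-1)"
  by (rule reflI2, (unfold itau)?, ((simp add: algebra_simps; fail) | (use tau_sq in algebra))+)

lemma rt_4_11: "refl (vec3 tau (inverse tau) (-1)) (vec3 (- tau) (-1) 0) = vec3 1 0 (- tau)"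
  by (rule reflI2, (unfold itau)?, ((simp add: algebra_simps; fail) | (use tau_sq in algebra))+)

lemma rt_5_0: "refl (vec3 tau (- inverse tau) 1) (vec3 0 tau 1) = vec3 0 tau 1"
  by (rule reflI2, (unfold itau)?, ((simp add: algebra_simps; fail) | (use tau_sq in algebra))+)

lemma rt_5_1: "refl (vec3 tau (- inverse tau) 1) (vec3 0 tau (-1)) = vec3 tau 1 0"
  by (rule reflI2, (unfold itau)?, ((simp add: algebra_simps; fail) | (use tau_sq in algebra))+)

lemma rt_5_2: "refl (vec3 tau (- inverse tau) 1) (vec3 0 (- tau) 1) = vec3 (- tau) (-1) 0"
  by (rule reflI2, (unfold itau)?, ((simp add: algebra_simps; fail) | (use tau_sq in algebra))+)

lemma rt_5_3: "refl (vec3 tau (- inverse tau) 1) (vec3 0 (- tau) (-1)) = vec3 0 (- tau) (-1)"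
  by (rule reflI2, (unfold itau)?, ((simp add: algebra_simps; fail) | (use tau_sq in algebra))+)

lemma rt_5_4: "refl (vec3 tau (- inverse tau) 1) (vec3 1 0 tau) = vec3 (- tau) 1 0"
  by (rule reflI2, (unfold itau)?, ((simp add: algebra_simps; fail) | (use tau_sq in algebra))+)

lemma rt_5_5: "refl (vec3 tau (- inverse tau) 1) (vec3 1 0 (- tau)) = vec3 1 0 (- tau)"
  by (rule reflI2, (unfold itau)?, ((simp add: algebra_simps; fail) | (use tau_sq in algebra))+)

lemma rt_5_6: "refl (vec3 tau (- inverse tau) 1) (vec3 (-1) 0 tau) = vec3 (-1) 0 tau"
  by (rule reflI2, (unfold itau)?, ((simp add: algebra_simps; fail) | (use tau_sq in algebra))+)

lemma rt_5_7: "refl (vec3 tau (- inverse tau) 1) (vec3 (-1) 0 (- tau)) = vec3 tau (-1) 0"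
  by (rule reflI2, (unfold itau)?, ((simp add: algebra_simps; fail) | (use tau_sq in algebra))+)

lemma rt_5_8: "refl (vec3 tau (- inverse tau) 1) (vec3 tau 1 0) = vec3 0 tau (-1)"
  by (rule reflI2, (unfold itau)?, ((simp add: algebra_simps; fail) | (use tau_sq in algebra))+)

lemma rt_5_9: "refl (vec3 tau (- inverse tau) 1) (vec3 tau (-1) 0) = vec3 (-1) 0 (- tau)"
  by (rule reflI2, (unfold itau)?, ((simp add: algebra_simps; fail) | (use tau_sq in algebra))+)

lemma rt_5_10: "refl (vec3 tau (- inverse tau) 1) (vec3 (- tau) 1 0) = vec3 1 0 tau"
  by (rule reflI2, (unfold itau)?, ((simp add: algebra_simps; fail) | (use tau_sq in algebra))+)

lemma rt_5_11: "refl (vec3 tau (- inverse tau) 1) (vec3 (- tau) (-1) 0) = vec3 0 (- tau) 1"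
  by (rule reflI2, (unfold itau)?, ((simp add: algebra_simps; fail) | (use tau_sq in algebra))+)

lemma rt_6_0: "refl (vec3 tau (- inverse tau) (-1)) (vec3 0 tau 1) = vec3 tau 1 0"
  by (rule reflI2, (unfold itau)?, ((simp add: algebra_simps; fail) | (use tau_sq in algebra))+)

lemma rt_6_1: "refl (vec3 tau (- inverse tau) (-1)) (vec3 0 tau (-1)) = vec3 0 tau (-1)"
  by (rule reflI2, (unfold itau)?, ((simp add: algebra_simps; fail) | (use tau_sq in algebra))+)

lemma rt_6_2: "refl (vec3 tau (- inverse tau) (-1)) (vec3 0 (- tau) 1) = vec3 0 (- tau) 1"
  by (rule reflI2, (unfold itau)?, ((simp add: algebra_simps; fail) | (use tau_sq in algebra))+)

lemma rt_6_3: "refl (vec3 tau (- inverse tau) (-1)) (vec3 0 (- tau) (-1)) = vec3 (- tau) (-1) 0"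
  by (rule reflI2, (unfold itau)?, ((simp add: algebra_simps; fail) | (use tau_sq in algebra))+)

lemma rt_6_4: "refl (vec3 tau (- inverse tau) (-1)) (vec3 1 0 tau) = vec3 1 0 tau"
  by (rule reflI2, (unfold itau)?, ((simp add: algebra_simps; fail) | (use tau_sq in algebra))+)

lemma rt_6_5: "refl (vec3 tau (- inverse tau) (-1)) (vec3 1 0 (- tau)) = vec3 (- tau) 1 0"
  by (rule reflI2, (unfold itau)?, ((simp add: algebra_simps; fail) | (use tau_sq in algebra))+)

lemma rt_6_6: "refl (vec3 tau (- inverse tau) (-1)) (vec3 (-1) 0 tau) = vec3 tau (-1) 0"
  by (rule reflI2, (unfold itau)?, ((simp add: algebra_simps; fail) | (use tau_sq in algebra))+)

lemma rt_6_7: "refl (vec3 tau (- inverse tau) (-1)) (vec3 (-1) 0 (- tau)) = vec3 (-1) 0 (- tau)"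
  by (rule reflI2, (unfold itau)?, ((simp add: algebra_simps; fail) | (use tau_sq in algebra))+)

lemma rt_6_8: "refl (vec3 tau (- inverse tau) (-1)) (vec3 tau 1 0) = vec3 0 tau 1"
  by (rule reflI2, (unfold itau)?, ((simp add: algebra_simps; fail) | (use tau_sq in algebra))+)

lemma rt_6_9: "refl (vec3 tau (- inverse tau) (-1)) (vec3 tau (-1) 0) = vec3 (-1) 0 tau"
  by (rule reflI2, (unfold itau)?, ((simp add: algebra_simps; fail) | (use tau_sq in algebra))+)

lemma rt_6_10: "refl (vec3 tau (- inverse tau) (-1)) (vec3 (- tau) 1 0) = vec3 1 0 (- tau)"
  by (rule reflI2, (unfold itau)?, ((simp add: algebra_simps; fail) | (use tau_sq in algebra))+)

lemma rt_6_11: "refl (vec3 tau (- inverse tau) (-1)) (vec3 (- tau) (-1) 0) = vec3 0 (- tau) (-1)"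
  by (rule reflI2, (unfold itau)?, ((simp add: algebra_simps; fail) | (use tau_sq in algebra))+)

lemma rt_7_0: "refl (vec3 1 tau (inverse tau)) (vec3 0 tau 1) = vec3 (- tau) (-1) 0"
  by (rule reflI2, (unfold itau)?, ((simp add: algebra_simps; fail) | (use tau_sq in algebra))+)

lemma rt_7_1: "refl (vec3 1 tau (inverse tau)) (vec3 0 tau (-1)) = vec3 (-1) 0 (- tau)"
  by (rule reflI2, (unfold itau)?, ((simp add: algebra_simps; fail) | (use tau_sq in algebra))+)

lemma rt_7_2: "refl (vec3 1 tau (inverse tau)) (vec3 0 (- tau) 1) = vec3 1 0 tau"
  by (rule reflI2, (unfold itau)?, ((simp add: algebra_simps; fail) | (use tau_sq in algebra))+)

lemma rt_7_3: "refl (vec3 1 tau (inverse tau)) (vec3 0 (- tau) (-1)) = vec3 tau 1 0"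
  by (rule reflI2, (unfold itau)?, ((simp add: algebra_simps; fail) | (use tau_sq in algebra))+)

lemma rt_7_4: "refl (vec3 1 tau (inverse tau)) (vec3 1 0 tau) = vec3 0 (- tau) 1"
  by (rule reflI2, (unfold itau)?, ((simp add: algebra_simps; fail) | (use tau_sq in algebra))+)

lemma rt_7_5: "refl (vec3 1 tau (inverse tau)) (vec3 1 0 (- tau)) = vec3 1 0 (- tau)"
  by (rule reflI2, (unfold itau)?, ((simp add: algebra_simps; fail) | (use tau_sq in algebra))+)

lemma rt_7_6: "refl (vec3 1 tau (inverse tau)) (vec3 (-1) 0 tau) = vec3 (-1) 0 tau"
  by (rule reflI2, (unfold itau)?, ((simp add: algebra_simps; fail) | (use tau_sq in algebra))+)

lemma rt_7_7: "refl (vec3 1 tau (inverse tau)) (vec3 (-1) 0 (- tau)) = vec3 0 tau (-1)"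
  by (rule reflI2, (unfold itau)?, ((simp add: algebra_simps; fail) | (use tau_sq in algebra))+)

lemma rt_7_8: "refl (vec3 1 tau (inverse tau)) (vec3 tau 1 0) = vec3 0 (- tau) (-1)"
  by (rule reflI2, (unfold itau)?, ((simp add: algebra_simps; fail) | (use tau_sq in algebra))+)

lemma rt_7_9: "refl (vec3 1 tau (inverse tau)) (vec3 tau (-1) 0) = vec3 tau (-1) 0"
  by (rule reflI2, (unfold itau)?, ((simp add: algebra_simps; fail) | (use tau_sq in algebra))+)

lemma rt_7_10: "refl (vec3 1 tau (inverse tau)) (vec3 (- tau) 1 0) = vec3 (- tau) 1 0"
  by (rule reflI2, (unfold itau)?, ((simp add: algebra_simps; fail) | (use tau_sq in algebra))+)

lemma rt_7_11: "refl (vec3 1 tau (inverse tau)) (vec3 (- tau) (-1) 0) = vec3 0 tau 1"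
  by (rule reflI2, (unfold itau)?, ((simp add: algebra_simps; fail) | (use tau_sq in algebra))+)

lemma rt_8_0: "refl (vec3 1 tau (- inverse tau)) (vec3 0 tau 1) = vec3 (-1) 0 tau"
  by (rule reflI2, (unfold itau)?, ((simp add: algebra_simps; fail) | (use tau_sq in algebra))+)

lemma rt_8_1: "refl (vec3 1 tau (- inverse tau)) (vec3 0 tau (-1)) = vec3 (- tau) (-1) 0"
  by (rule reflI2, (unfold itau)?, ((simp add: algebra_simps; fail) | (use tau_sq in algebra))+)

lemma rt_8_2: "refl (vec3 1 tau (- inverse tau)) (vec3 0 (- tau) 1) = vec3 tau 1 0"
  by (rule reflI2, (unfold itau)?, ((simp add: algebra_simps; fail) | (use tau_sq in algebra))+)

lemma rt_8_3: "refl (vec3 1 tau (- inverse tau)) (vec3 0 (- tau) (-1)) = vec3 1 0 (- tau)"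
  by (rule reflI2, (unfold itau)?, ((simp add: algebra_simps; fail) | (use tau_sq in algebra))+)

lemma rt_8_4: "refl (vec3 1 tau (- inverse tau)) (vec3 1 0 tau) = vec3 1 0 tau"
  by (rule reflI2, (unfold itau)?, ((simp add: algebra_simps; fail) | (use tau_sq in algebra))+)

lemma rt_8_5: "refl (vec3 1 tau (- inverse tau)) (vec3 1 0 (- tau)) = vec3 0 (- tau) (-1)"
  by (rule reflI2, (unfold itau)?, ((simp add: algebra_simps; fail) | (use tau_sq in algebra))+)

lemma rt_8_6: "refl (vec3 1 tau (- inverse tau)) (vec3 (-1) 0 tau) = vec3 0 tau 1"
  by (rule reflI2, (unfold itau)?, ((simp add: algebra_simps; fail) | (use tau_sq in algebra))+)

lemma rt_8_7: "refl (vec3 1 tau (- inverse tau)) (vec3 (-1) 0 (- tau)) = vec3 (-1) 0 (- tau)"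
  by (rule reflI2, (unfold itau)?, ((simp add: algebra_simps; fail) | (use tau_sq in algebra))+)

lemma rt_8_8: "refl (vec3 1 tau (- inverse tau)) (vec3 tau 1 0) = vec3 0 (- tau) 1"
  by (rule reflI2, (unfold itau)?, ((simp add: algebra_simps; fail) | (use tau_sq in algebra))+)

lemma rt_8_9: "refl (vec3 1 tau (- inverse tau)) (vec3 tau (-1) 0) = vec3 tau (-1) 0"
  by (rule reflI2, (unfold itau)?, ((simp add: algebra_simps; fail) | (use tau_sq in algebra))+)

lemma rt_8_10: "refl (vec3 1 tau (- inverse tau)) (vec3 (- tau) 1 0) = vec3 (- tau) 1 0"
  by (rule reflI2, (unfold itau)?, ((simp add: algebra_simps; fail) | (use tau_sq in algebra))+)

lemma rt_8_11: "refl (vec3 1 tau (- inverse tau)) (vec3 (- tau) (-1) 0) = vec3 0 tau (-1)"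
  by (rule reflI2, (unfold itau)?, ((simp add: algebra_simps; fail) | (use tau_sq in algebra))+)

lemma rt_9_0: "refl (vec3 (-1) tau (inverse tau)) (vec3 0 tau 1) = vec3 tau (-1) 0"
  by (rule reflI2, (unfold itau)?, ((simp add: algebra_simps; fail) | (use tau_sq in algebra))+)

lemma rt_9_1: "refl (vec3 (-1) tau (inverse tau)) (vec3 0 tau (-1)) = vec3 1 0 (- tau)"
  by (rule reflI2, (unfold itau)?, ((simp add: algebra_simps; fail) | (use tau_sq in algebra))+)

lemma rt_9_2: "refl (vec3 (-1) tau (inverse tau)) (vec3 0 (- tau) 1) = vec3 (-1) 0 tau"
  by (rule reflI2, (unfold itau)?, ((simp add: algebra_simps; fail) | (use tau_sq in algebra))+)

lemma rt_9_3: "refl (vec3 (-1) tau (inverse tau)) (vec3 0 (- tau) (-1)) = vec3 (- tau) 1 0"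
  by (rule reflI2, (unfold itau)?, ((simp add: algebra_simps; fail) | (use tau_sq in algebra))+)

lemma rt_9_4: "refl (vec3 (-1) tau (inverse tau)) (vec3 1 0 tau) = vec3 1 0 tau"
  by (rule reflI2, (unfold itau)?, ((simp add: algebra_simps; fail) | (use tau_sq in algebra))+)

lemma rt_9_5: "refl (vec3 (-1) tau (inverse tau)) (vec3 1 0 (- tau)) = vec3 0 tau (-1)"
  by (rule reflI2, (unfold itau)?, ((simp add: algebra_simps; fail) | (use tau_sq in algebra))+)

lemma rt_9_6: "refl (vec3 (-1) tau (inverse tau)) (vec3 (-1) 0 tau) = vec3 0 (- tau) 1"
  by (rule reflI2, (unfold itau)?, ((simp add: algebra_simps; fail) | (use tau_sq in algebra))+)

lemma rt_9_7: "refl (vec3 (-1) tau (inverse tau)) (vec3 (-1) 0 (- tau)) = vec3 (-1) 0 (- tau)"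
  by (rule reflI2, (unfold itau)?, ((simp add: algebra_simps; fail) | (use tau_sq in algebra))+)

lemma rt_9_8: "refl (vec3 (-1) tau (inverse tau)) (vec3 tau 1 0) = vec3 tau 1 0"
  by (rule reflI2, (unfold itau)?, ((simp add: algebra_simps; fail) | (use tau_sq in algebra))+)

lemma rt_9_9: "refl (vec3 (-1) tau (inverse tau)) (vec3 tau (-1) 0) = vec3 0 tau 1"
  by (rule reflI2, (unfold itau)?, ((simp add: algebra_simps; fail) | (use tau_sq in algebra))+)

lemma rt_9_10: "refl (vec3 (-1) tau (inverse tau)) (vec3 (- tau) 1 0) = vec3 0 (- tau) (-1)"
  by (rule reflI2, (unfold itau)?, ((simp add: algebra_simps; fail) | (use tau_sq in algebra))+)

lemma rt_9_11: "refl (vec3 (-1) tau (inverse tau)) (vec3 (- tau) (-1) 0) = vec3 (- tau) (-1) 0"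
  by (rule reflI2, (unfold itau)?, ((simp add: algebra_simps; fail) | (use tau_sq in algebra))+)

lemma rt_10_0: "refl (vec3 (-1) tau (- inverse tau)) (vec3 0 tau 1) = vec3 1 0 tau"
  by (rule reflI2, (unfold itau)?, ((simp add: algebra_simps; fail) | (use tau_sq in algebra))+)

lemma rt_10_1: "refl (vec3 (-1) tau (- inverse tau)) (vec3 0 tau (-1)) = vec3 tau (-1) 0"
  by (rule reflI2, (unfold itau)?, ((simp add: algebra_simps; fail) | (use tau_sq in algebra))+)

lemma rt_10_2: "refl (vec3 (-1) tau (- inverse tau)) (vec3 0 (- tau) 1) = vec3 (- tau) 1 0"
  by (rule reflI2, (unfold itau)?, ((simp add: algebra_simps; fail) | (use tau_sq in algebra))+)

lemma rt_10_3: "refl (vec3 (-1) tau (- inverse tau)) (vec3 0 (- tau) (-1)) = vec3 (-1) 0 (- tau)"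
  by (rule reflI2, (unfold itau)?, ((simp add: algebra_simps; fail) | (use tau_sq in algebra))+)

lemma rt_10_4: "refl (vec3 (-1) tau (- inverse tau)) (vec3 1 0 tau) = vec3 0 tau 1"
  by (rule reflI2, (unfold itau)?, ((simp add: algebra_simps; fail) | (use tau_sq in algebra))+)

lemma rt_10_5: "refl (vec3 (-1) tau (- inverse tau)) (vec3 1 0 (- tau)) = vec3 1 0 (- tau)"
  by (rule reflI2, (unfold itau)?, ((simp add: algebra_simps; fail) | (use tau_sq in algebra))+)

lemma rt_10_6: "refl (vec3 (-1) tau (- inverse tau)) (vec3 (-1) 0 tau) = vec3 (-1) 0 tau"
  by (rule reflI2, (unfold itau)?, ((simp add: algebra_simps; fail) | (use tau_sq in algebra))+)

lemma rt_10_7: "refl (vec3 (-1) tau (- inverse tau)) (vec3 (-1) 0 (- tau)) = vec3 0 (- tau) (-1)"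
  by (rule reflI2, (unfold itau)?, ((simp add: algebra_simps; fail) | (use tau_sq in algebra))+)

lemma rt_10_8: "refl (vec3 (-1) tau (- inverse tau)) (vec3 tau 1 0) = vec3 tau 1 0"
  by (rule reflI2, (unfold itau)?, ((simp add: algebra_simps; fail) | (use tau_sq in algebra))+)

lemma rt_10_9: "refl (vec3 (-1) tau (- inverse tau)) (vec3 tau (-1) 0) = vec3 0 tau (-1)"
  by (rule reflI2, (unfold itau)?, ((simp add: algebra_simps; fail) | (use tau_sq in algebra))+)

lemma rt_10_10: "refl (vec3 (-1) tau (- inverse tau)) (vec3 (- tau) 1 0) = vec3 0 (- tau) 1"
  by (rule reflI2, (unfold itau)?, ((simp add: algebra_simps; fail) | (use tau_sq in algebra))+)

lemma rt_10_11: "refl (vec3 (-1) tau (- inverse tau)) (vec3 (- tau) (-1) 0) = vec3 (- tau) (-1) 0"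
  by (rule reflI2, (unfold itau)?, ((simp add: algebra_simps; fail) | (use tau_sq in algebra))+)

lemma rt_11_0: "refl (vec3 (inverse tau) 1 tau) (vec3 0 tau 1) = vec3 (-1) 0 (- tau)"
  by (rule reflI2, (unfold itau)?, ((simp add: algebra_simps; fail) | (use tau_sq in algebra))+)

lemma rt_11_1: "refl (vec3 (inverse tau) 1 tau) (vec3 0 tau (-1)) = vec3 0 tau (-1)"
  by (rule reflI2, (unfold itau)?, ((simp add: algebra_simps; fail) | (use tau_sq in algebra))+)

lemma rt_11_2: "refl (vec3 (inverse tau) 1 tau) (vec3 0 (- tau) 1) = vec3 0 (- tau) 1"
  by (rule reflI2, (unfold itau)?, ((simp add: algebra_simps; fail) | (use tau_sq in algebra))+)

lemma rt_11_3: "refl (vec3 (inverse tau) 1 tau) (vec3 0 (- tau) (-1)) = vec3 1 0 tau"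
  by (rule reflI2, (unfold itau)?, ((simp add: algebra_simps; fail) | (use tau_sq in algebra))+)

lemma rt_11_4: "refl (vec3 (inverse tau) 1 tau) (vec3 1 0 tau) = vec3 0 (- tau) (-1)"
  by (rule reflI2, (unfold itau)?, ((simp add: algebra_simps; fail) | (use tau_sq in algebra))+)

lemma rt_11_5: "refl (vec3 (inverse tau) 1 tau) (vec3 1 0 (- tau)) = vec3 tau 1 0"
  by (rule reflI2, (unfold itau)?, ((simp add: algebra_simps; fail) | (use tau_sq in algebra))+)

lemma rt_11_6: "refl (vec3 (inverse tau) 1 tau) (vec3 (-1) 0 tau) = vec3 (- tau) (-1) 0"
  by (rule reflI2, (unfold itau)?, ((simp add: algebra_simps; fail) | (use tau_sq in algebra))+)

lemma rt_11_7: "refl (vec3 (inverse tau) 1 tau) (vec3 (-1) 0 (- tau)) = vec3 0 tau 1"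
  by (rule reflI2, (unfold itau)?, ((simp add: algebra_simps; fail) | (use tau_sq in algebra))+)

lemma rt_11_8: "refl (vec3 (inverse tau) 1 tau) (vec3 tau 1 0) = vec3 1 0 (- tau)"
  by (rule reflI2, (unfold itau)?, ((simp add: algebra_simps; fail) | (use tau_sq in algebra))+)

lemma rt_11_9: "refl (vec3 (inverse tau) 1 tau) (vec3 tau (-1) 0) = vec3 tau (-1) 0"
  by (rule reflI2, (unfold itau)?, ((simp add: algebra_simps; fail) | (use tau_sq in algebra))+)

lemma rt_11_10: "refl (vec3 (inverse tau) 1 tau) (vec3 (- tau) 1 0) = vec3 (- tau) 1 0"
  by (rule reflI2, (unfold itau)?, ((simp add: algebra_simps; fail) | (use tau_sq in algebra))+)

lemma rt_11_11: "refl (vec3 (inverse tau) 1 tau) (vec3 (- tau) (-1) 0) = vec3 (-1) 0 tau"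
  by (rule reflI2, (unfold itau)?, ((simp add: algebra_simps; fail) | (use tau_sq in algebra))+)

lemma rt_12_0: "refl (vec3 (inverse tau) (-1) tau) (vec3 0 tau 1) = vec3 0 tau 1"
  by (rule reflI2, (unfold itau)?, ((simp add: algebra_simps; fail) | (use tau_sq in algebra))+)

lemma rt_12_1: "refl (vec3 (inverse tau) (-1) tau) (vec3 0 tau (-1)) = vec3 1 0 tau"
  by (rule reflI2, (unfold itau)?, ((simp add: algebra_simps; fail) | (use tau_sq in algebra))+)

lemma rt_12_2: "refl (vec3 (inverse tau) (-1) tau) (vec3 0 (- tau) 1) = vec3 (-1) 0 (- tau)"
  by (rule reflI2, (unfold itau)?, ((simp add: algebra_simps; fail) | (use tau_sq in algebra))+)

lemma rt_12_3: "refl (vec3 (inverse tau) (-1) tau) (vec3 0 (- tau) (-1)) = vec3 0 (- tau) (-1)"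
  by (rule reflI2, (unfold itau)?, ((simp add: algebra_simps; fail) | (use tau_sq in algebra))+)

lemma rt_12_4: "refl (vec3 (inverse tau) (-1) tau) (vec3 1 0 tau) = vec3 0 tau (-1)"
  by (rule reflI2, (unfold itau)?, ((simp add: algebra_simps; fail) | (use tau_sq in algebra))+)

lemma rt_12_5: "refl (vec3 (inverse tau) (-1) tau) (vec3 1 0 (- tau)) = vec3 tau (-1) 0"
  by (rule reflI2, (unfold itau)?, ((simp add: algebra_simps; fail) | (use tau_sq in algebra))+)

lemma rt_12_6: "refl (vec3 (inverse tau) (-1) tau) (vec3 (-1) 0 tau) = vec3 (- tau) 1 0"
  by (rule reflI2, (unfold itau)?, ((simp add: algebra_simps; fail) | (use tau_sq in algebra))+)

lemma rt_12_7: "refl (vec3 (inverse tau) (-1) tau) (vec3 (-1) 0 (- tau)) = vec3 0 (- tau) 1"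
  by (rule reflI2, (unfold itau)?, ((simp add: algebra_simps; fail) | (use tau_sq in algebra))+)

lemma rt_12_8: "refl (vec3 (inverse tau) (-1) tau) (vec3 tau 1 0) = vec3 tau 1 0"
  by (rule reflI2, (unfold itau)?, ((simp add: algebra_simps; fail) | (use tau_sq in algebra))+)

lemma rt_12_9: "refl (vec3 (inverse tau) (-1) tau) (vec3 tau (-1) 0) = vec3 1 0 (- tau)"
  by (rule reflI2, (unfold itau)?, ((simp add: algebra_simps; fail) | (use tau_sq in algebra))+)

lemma rt_12_10: "refl (vec3 (inverse tau) (-1) tau) (vec3 (- tau) 1 0) = vec3 (-1) 0 tau"
  by (rule reflI2, (unfold itau)?, ((simp add: algebra_simps; fail) | (use tau_sq in algebra))+)

lemma rt_12_11: "refl (vec3 (inverse tau) (-1) tau) (vec3 (- tau) (-1) 0) = vec3 (- tau) (-1) 0"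
  by (rule reflI2, (unfold itau)?, ((simp add: algebra_simps; fail) | (use tau_sq in algebra))+)

lemma rt_13_0: "refl (vec3 (- inverse tau) 1 tau) (vec3 0 tau 1) = vec3 1 0 (- tau)"
  by (rule reflI2, (unfold itau)?, ((simp add: algebra_simps; fail) | (use tau_sq in algebra))+)

lemma rt_13_1: "refl (vec3 (- inverse tau) 1 tau) (vec3 0 tau (-1)) = vec3 0 tau (-1)"
  by (rule reflI2, (unfold itau)?, ((simp add: algebra_simps; fail) | (use tau_sq in algebra))+)

lemma rt_13_2: "refl (vec3 (- inverse tau) 1 tau) (vec3 0 (- tau) 1) = vec3 0 (- tau) 1"
  by (rule reflI2, (unfold itau)?, ((simp add: algebra_simps; fail) | (use tau_sq in algebra))+)

lemma rt_13_3: "refl (vec3 (- inverse tau) 1 tau) (vec3 0 (- tau) (-1)) = vec3 (-1) 0 tau"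
  by (rule reflI2, (unfold itau)?, ((simp add: algebra_simps; fail) | (use tau_sq in algebra))+)

lemma rt_13_4: "refl (vec3 (- inverse tau) 1 tau) (vec3 1 0 tau) = vec3 tau (-1) 0"
  by (rule reflI2, (unfold itau)?, ((simp add: algebra_simps; fail) | (use tau_sq in algebra))+)

lemma rt_13_5: "refl (vec3 (- inverse tau) 1 tau) (vec3 1 0 (- tau)) = vec3 0 tau 1"
  by (rule reflI2, (unfold itau)?, ((simp add: algebra_simps; fail) | (use tau_sq in algebra))+)

lemma rt_13_6: "refl (vec3 (- inverse tau) 1 tau) (vec3 (-1) 0 tau) = vec3 0 (- tau) (-1)"
  by (rule reflI2, (unfold itau)?, ((simp add: algebra_simps; fail) | (use tau_sq in algebra))+)

lemma rt_13_7: "refl (vec3 (- inverse tau) 1 tau) (vec3 (-1) 0 (- tau)) = vec3 (- tau) 1 0"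
  by (rule reflI2, (unfold itau)?, ((simp add: algebra_simps; fail) | (use tau_sq in algebra))+)

lemma rt_13_8: "refl (vec3 (- inverse tau) 1 tau) (vec3 tau 1 0) = vec3 tau 1 0"
  by (rule reflI2, (unfold itau)?, ((simp add: algebra_simps; fail) | (use tau_sq in algebra))+)

lemma rt_13_9: "refl (vec3 (- inverse tau) 1 tau) (vec3 tau (-1) 0) = vec3 1 0 tau"
  by (rule reflI2, (unfold itau)?, ((simp add: algebra_simps; fail) | (use tau_sq in algebra))+)

lemma rt_13_10: "refl (vec3 (- inverse tau) 1 tau) (vec3 (- tau) 1 0) = vec3 (-1) 0 (- tau)"
  by (rule reflI2, (unfold itau)?, ((simp add: algebra_simps; fail) | (use tau_sq in algebra))+)

lemma rt_13_11: "refl (vec3 (- inverse tau) 1 tau) (vec3 (- tau) (-1) 0) = vec3 (- tau) (-1) 0"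
  by (rule reflI2, (unfold itau)?, ((simp add: algebra_simps; fail) | (use tau_sq in algebra))+)

lemma rt_14_0: "refl (vec3 (inverse tau) 1 (- tau)) (vec3 0 tau 1) = vec3 0 tau 1"
  by (rule reflI2, (unfold itau)?, ((simp add: algebra_simps; fail) | (use tau_sq in algebra))+)

lemma rt_14_1: "refl (vec3 (inverse tau) 1 (- tau)) (vec3 0 tau (-1)) = vec3 (-1) 0 tau"
  by (rule reflI2, (unfold itau)?, ((simp add: algebra_simps; fail) | (use tau_sq in algebra))+)

lemma rt_14_2: "refl (vec3 (inverse tau) 1 (- tau)) (vec3 0 (- tau) 1) = vec3 1 0 (- tau)"
  by (rule reflI2, (unfold itau)?, ((simp add: algebra_simps; fail) | (use tau_sq in algebra))+)

lemma rt_14_3: "refl (vec3 (inverse tau) 1 (- tau)) (vec3 0 (- tau) (-1)) = vec3 0 (- tau) (-1)"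
  by (rule reflI2, (unfold itau)?, ((simp add: algebra_simps; fail) | (use tau_sq in algebra))+)

lemma rt_14_4: "refl (vec3 (inverse tau) 1 (- tau)) (vec3 1 0 tau) = vec3 tau 1 0"
  by (rule reflI2, (unfold itau)?, ((simp add: algebra_simps; fail) | (use tau_sq in algebra))+)

lemma rt_14_5: "refl (vec3 (inverse tau) 1 (- tau)) (vec3 1 0 (- tau)) = vec3 0 (- tau) 1"
  by (rule reflI2, (unfold itau)?, ((simp add: algebra_simps; fail) | (use tau_sq in algebra))+)

lemma rt_14_6: "refl (vec3 (inverse tau) 1 (- tau)) (vec3 (-1) 0 tau) = vec3 0 tau (-1)"
  by (rule reflI2, (unfold itau)?, ((simp add: algebra_simps; fail) | (use tau_sq in algebra))+)

lemma rt_14_7: "refl (vec3 (inverse tau) 1 (- tau)) (vec3 (-1) 0 (- tau)) = vec3 (- tau) (-1) 0"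
  by (rule reflI2, (unfold itau)?, ((simp add: algebra_simps; fail) | (use tau_sq in algebra))+)

lemma rt_14_8: "refl (vec3 (inverse tau) 1 (- tau)) (vec3 tau 1 0) = vec3 1 0 tau"
  by (rule reflI2, (unfold itau)?, ((simp add: algebra_simps; fail) | (use tau_sq in algebra))+)

lemma rt_14_9: "refl (vec3 (inverse tau) 1 (- tau)) (vec3 tau (-1) 0) = vec3 tau (-1) 0"
  by (rule reflI2, (unfold itau)?, ((simp add: algebra_simps; fail) | (use tau_sq in algebra))+)

lemma rt_14_10: "refl (vec3 (inverse tau) 1 (- tau)) (vec3 (- tau) 1 0) = vec3 (- tau) 1 0"
  by (rule reflI2, (unfold itau)?, ((simp add: algebra_simps; fail) | (use tau_sq in algebra))+)

lemma rt_14_11: "refl (vec3 (inverse tau) 1 (- tau)) (vec3 (- tau) (-1) 0) = vec3 (-1) 0 (- tau)"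
  by (rule reflI2, (unfold itau)?, ((simp add: algebra_simps; fail) | (use tau_sq in algebra))+)

lemmas refl_tab = rt_0_0 rt_0_1 rt_0_2 rt_0_3 rt_0_4 rt_0_5 rt_0_6 rt_0_7 rt_0_8 rt_0_9 rt_0_10 rt_0_11 rt_1_0 rt_1_1 rt_1_2 rt_1_3 rt_1_4 rt_1_5 rt_1_6 rt_1_7 rt_1_8 rt_1_9 rt_1_10 rt_1_11 rt_2_0 rt_2_1 rt_2_2 rt_2_3 rt_2_4 rt_2_5 rt_2_6 rt_2_7 rt_2_8 rt_2_9 rt_2_10 rt_2_11 rt_3_0 rt_3_1 rt_3_2 rt_3_3 rt_3_4 rt_3_5 rt_3_6 rt_3_7 rt_3_8 rt_3_9 rt_3_10 rt_3_11 rt_4_0 rt_4_1 rt_4_2 rt_4_3 rt_4_4 rt_4_5 rt_4_6 rt_4_7 rt_4_8 rt_4_9 rt_4_10 rt_4_11 rt_5_0 rt_5_1 rt_5_2 rt_5_3 rt_5_4 rt_5_5 rt_5_6 rt_5_7 rt_5_8 rt_5_9 rt_5_10 rt_5_11 rt_6_0 rt_6_1 rt_6_2 rt_6_3 rt_6_4 rt_6_5 rt_6_6 rt_6_7 rt_6_8 rt_6_9 rt_6_10 rt_6_11 rt_7_0 rt_7_1 rt_7_2 rt_7_3 rt_7_4 rt_7_5 rt_7_6 rt_7_7 rt_7_8 rt_7_9 rt_7_10 rt_7_11 rt_8_0 rt_8_1 rt_8_2 rt_8_3 rt_8_4 rt_8_5 rt_8_6 rt_8_7 rt_8_8 rt_8_9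 rt_8_10 rt_8_11 rt_9_0 rt_9_1 rt_9_2 rt_9_3 rt_9_4 rt_9_5 rt_9_6 rt_9_7 rt_9_8 rt_9_9 rt_9_10 rt_9_11 rt_10_0 rt_10_1 rt_10_2 rt_10_3 rt_10_4 rt_10_5 rt_10_6 rt_10_7 rt_10_8 rt_10_9 rt_10_10 rt_10_11 rt_11_0 rt_11_1 rt_11_2 rt_11_3 rt_11_4 rt_11_5 rt_11_6 rt_11_7 rt_11_8 rt_11_9 rt_11_10 rt_11_11 rt_12_0 rt_12_1 rt_12_2 rt_12_3 rt_12_4 rt_12_5 rt_12_6 rt_12_7 rt_12_8 rt_12_9 rt_12_10 rt_12_11 rt_13_0 rt_13_1 rt_13_2 rt_13_3 rt_13_4 rt_13_5 rt_13_6 rt_13_7 rt_13_8 rt_13_9 rt_13_10 rt_13_11 rt_14_0 rt_14_1 rt_14_2 rt_14_3 rt_14_4 rt_14_5 rt_14_6 rt_14_7 rt_14_8 rt_14_9 rt_14_10 rt_14_11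

lemma pm2: "{f s t | s t. s \<in> {1::real, -1} \<and> t \<in> {1::real, -1}} = {f 1 1, f 1 (-1), f (-1) 1, f (-1) (-1)}"
  by auto
lemma pm1: "{f s | s. s \<in> {1::real, -1}} = {f 1, f (-1)}"
  by auto
lemma Rplus_list: "Rplus = set Rlist"
  unfolding Rplus_def Rlist_def pm1 pm2 by auto
lemma Ico_list: "Ico = set Ilist"
  unfolding Ico_def Ilist_def pm1 pm2 by auto
lemma distinct_Rlist: "distinct Rlist"
  using tau_pos tau_lt2 unfolding Rlist_def by (auto simp: vec3_eq_iff itau)
lemma distinct_Ilist: "distinct Ilist"
  using tau_pos tau_lt2 unfolding Ilist_def by (auto simp: vec3_eq_iff)
lemma card_Ico: "card Ico = 12"
  unfolding Ico_list using distinct_card[OF distinct_Ilist] by (simp add: Ilist_def)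
lemma finite_Ico: "finite Ico" unfolding Ico_list by simp
lemma finite_Rplus: "finite Rplus" unfolding Rplus_list by simp
lemma refl_Ico: assumes "v \<in> Rplus" shows "refl v ` Ico = Ico"
  using assms unfolding Rplus_list Ico_list Rlist_def Ilist_def
  by (simp only: set_simps insert_iff empty_iff image_insert image_empty refl_tab; elim disjE; simp only: refl_tab; auto)
lemma uminus_Ico: "uminus ` Ico = Ico"
  unfolding Ico_list Ilist_def by (auto simp: vec3_uminus)
lemma five: "(5::'a::comm_ring_1) * a = a + a + a + a + a"
  by (simp add: algebra_simps numeral_eq_Suc)
lemma sum_refl:
  fixes h :: "real^3 \<Rightarrow> 'a::comm_ring_1"
  assumes "y0 \<in> Ico"
  shows "(\<Sum>v\<in>Rplus. h (refl v y0)) = 5 * h y0 + (\<Sum>y\<in>Ico. h y) - h y0 - h (-y0)"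
proof -
  have A: "(\<Sum>v\<in>Rplus. h (refl v y0)) = sum_list (map (\<lambda>v. h (refl v y0)) Rlist)"
    unfolding Rplus_list by (simp add: sum_list_distinct_conv_sum_set distinct_Rlist)
  have B: "(\<Sum>y\<in>Ico. h y) = sum_list (map h Ilist)"
    unfolding Ico_list by (simp add: sum_list_distinct_conv_sum_set distinct_Ilist)
  have C: "y0 \<in> set Ilist" using assms Ico_list by simp
  show ?thesis
    using C unfolding A B Rlist_def Ilist_def
    apply (simp only: set_simps insert_iff empty_iff simp_thms)
    apply (elim disjE)
    apply (simp_all only: list.map sum_list_simps refl_tab vec3_uminus minus_minus minus_zero)
    apply (simp_all only: five)
    apply (simp_all add: algebra_simps)
    done
qed

definition G :: "real \<Rightarrow> real fps" where
  "G c = inverse (1 - fps_const c * fps_X)"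

lemma G_mult: "G c * (1 - fps_const c * fps_X) = 1"
  unfolding G_def by (rule inverse_mult_eq_1) simp

lemma G_nth: "fps_nth (G c) n = c ^ n"
proof -
  have "(1 - fps_const c * fps_X) * Abs_fps (\<lambda>n. c ^ n) = 1"
  proof (rule fps_ext)
    fix n show "fps_nth ((1 - fps_const c * fps_X) * Abs_fps (\<lambda>n. c ^ n)) n = fps_nth (1::real fps) n"
      by (cases n) (simp_all add: algebra_simps)
  qed
  then have "inverse (1 - fps_const c * fps_X) = Abs_fps (\<lambda>n. c ^ n)"
    by (rule fps_inverse_unique)
  then show ?thesis unfolding G_def by simp
qed

lemma B_nth: "fps_nth (binom_series k c) n = (-c) ^ n * ((-k) gchoose n)"
  unfolding binom_series_def by simp

lemma gb_rec: "of_nat (Suc m) * ((-k) gchoose Suc m) = (-k - of_nat m) * ((-k::real) gchoose m)"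
  using gbinomial_mult_1[of "-k" m] by (simp add: algebra_simps)

lemma B_deriv: "fps_deriv (binom_series k c) = fps_const (k * c) * binom_series k c * G c"
proof -
  have "(1 - fps_const c * fps_X) * fps_deriv (binom_series k c) = fps_const (k * c) * binom_series k c"
  proof (rule fps_ext)
    fix n
    show "fps_nth ((1 - fps_const c * fps_X) * fps_deriv (binom_series k c)) n = fps_nth (fps_const (k * c) * binom_series k c) n"
    proof (cases n)
      case 0 then show ?thesis by (simp add: B_nth)
    next
      case (Suc m)
      have key: "of_nat (Suc (Suc m)) * ((-k) gchoose Suc (Suc m)) = (-k - of_nat (Suc m)) * ((-k::real) gchoose (Suc m))"
        by (rule gb_rec)
      have "c*c*(-c)^m * (of_nat (Suc (Suc m)) * ((-k) gchoose Suc (Suc m))) = c*c*(-c)^m * ((-k - of_nat (Suc m)) * ((-k::real) gchoose (Suc m)))"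
        using key by simp
      then show ?thesis using Suc
        by (simp add: B_nth algebra_simps power_Suc)
    qed
  qed
  then show ?thesis using G_mult[of c] by algebra
qed


lemma Qc_eq: "Abs_fps (\<lambda>n. - of_nat n * (-c)^(n-1) * ((-k) gchoose n)) = fps_const k * fps_X * binom_series k c * G c"
proof -
  let ?Q = "Abs_fps (\<lambda>n. - of_nat n * (-c)^(n-1) * ((-k) gchoose n))"
  have "(1 - fps_const c * fps_X) * ?Q = fps_const k * fps_X * binom_series k c"
  proof (rule fps_ext)
    fix n
    show "fps_nth ((1 - fps_const c * fps_X) * ?Q) n = fps_nth (fps_const k * fps_X * binom_series k c) n"
    proof (cases n)
      case 0 then show ?thesis by simp
    next
      case (Suc m)
      note key = gb_rec[of m k]
      show ?thesis
      proof (cases m)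
        case 0 then show ?thesis using Suc by (simp add: B_nth)
      next
        case (Suc j)
        have "c*(-c)^j * (of_nat (Suc m) * ((-k) gchoose Suc m)) = c*(-c)^j * ((-k - of_nat m) * ((-k::real) gchoose m))"
          using key by simp
        then show ?thesis using Suc \<open>n = Suc m\<close>
          by (simp add: B_nth algebra_simps power_Suc)
      qed
    qed
  qed
  then show ?thesis using G_mult[of c] by algebra
qed

lemma Qg_eq: "Abs_fps (\<lambda>n. of_nat n * c^(n-1)) = fps_X * G c * G c"
proof -
  let ?Q = "Abs_fps (\<lambda>n. of_nat n * c^(n-1))"
  have "(1 - fps_const c * fps_X) * ?Q = fps_X * G c"
  proof (rule fps_ext)
    fix n
    show "fps_nth ((1 - fps_const c * fps_X) * ?Q) n = fps_nth (fps_X * G c) n"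
    proof (cases n)
      case 0 then show ?thesis by simp
    next
      case (Suc m)
      then show ?thesis by (cases m) (simp_all add: G_nth algebra_simps)
    qed
  qed
  then show ?thesis using G_mult[of c] by algebra
qed

lemma B_dc: "((\<lambda>t. fps_nth (binom_series k (c + t*d)) n) has_real_derivative
   fps_nth (fps_const (k*d) * fps_X * binom_series k c * G c) n) (at 0)"
proof -
  have "fps_nth (fps_const (k*d) * fps_X * binom_series k c * G c) n
     = d * fps_nth (Abs_fps (\<lambda>n. - of_nat n * (-c)^(n-1) * ((-k) gchoose n))) n"
    unfolding Qc_eq by (simp add: algebra_simps fps_const_mult[symmetric] del: fps_const_mult)
  also have "\<dots> = of_nat n * (-(c + 0*d))^(n-1) * (-d) * ((-k) gchoose n)" by simp
  finally have e: "fps_nth (fps_const (k*d) * fps_X * binom_series k c * G c) n = of_nat n * (-(c + 0*d))^(n-1) * (-d) * ((-k) gchoose n)" .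
  show ?thesis unfolding e B_nth
    by (auto intro!: derivative_eq_intros)
qed

lemma G_dc: "((\<lambda>t. fps_nth (G (c + t*d)) n) has_real_derivative
   fps_nth (fps_const d * fps_X * G c * G c) n) (at 0)"
proof -
  have "fps_nth (fps_const d * fps_X * G c * G c) n
     = d * fps_nth (Abs_fps (\<lambda>n. of_nat n * c^(n-1))) n"
    unfolding Qg_eq by (simp add: algebra_simps)
  also have "\<dots> = of_nat n * (c + 0*d)^(n-1) * d" by simp
  finally have e: "fps_nth (fps_const d * fps_X * G c * G c) n = of_nat n * (c + 0*d)^(n-1) * d" .
  show ?thesis unfolding e G_nth
    by (auto intro!: derivative_eq_intros)
qed

definition hasD :: "(real^3 \<Rightarrow> real fps) \<Rightarrow> real fps \<Rightarrow> real^3 \<Rightarrow> real^3 \<Rightarrow> bool" where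
  "hasD P Q x e \<longleftrightarrow> (\<forall>n. ((\<lambda>t. fps_nth (P (x + t *\<^sub>R e)) n) has_real_derivative fps_nth Q n) (at 0))"

lemma hasD_mult:
  assumes "hasD P Q x e" "hasD R S x e"
  shows "hasD (\<lambda>z. P z * R z) (Q * R x + P x * S) x e"
  unfolding hasD_def
proof
  fix n
  have d: "((\<lambda>t. fps_nth (P (x+t*\<^sub>R e)) i * fps_nth (R (x+t*\<^sub>R e)) (n-i)) has_real_derivative
      (fps_nth Q i * fps_nth (R x) (n-i) + fps_nth (P x) i * fps_nth S (n-i))) (at 0)" for i
    using DERIV_mult[OF assms(1)[unfolded hasD_def, rule_format, of i] assms(2)[unfolded hasD_def, rule_format, of "n-i"]]
    by (simp add: mult.commute)
  have "((\<lambda>t. \<Sum>i=0..n. fps_nth (P (x+t*\<^sub>R e)) i * fps_nth (R (x+t*\<^sub>R e)) (n-i)) has_real_derivative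
      (\<Sum>i=0..n. fps_nth Q i * fps_nth (R x) (n-i) + fps_nth (P x) i * fps_nth S (n-i))) (at 0)"
    by (rule DERIV_sum) (rule d)
  then show "((\<lambda>t. fps_nth (P (x + t *\<^sub>R e) * R (x + t *\<^sub>R e)) n) has_real_derivative
          fps_nth (Q * R x + P x * S) n) (at 0)"
    by (simp add: fps_mult_nth sum.distrib)
qed

lemma hasD_cong: "hasD P Q x e \<Longrightarrow> (\<And>z. P z = P' z) \<Longrightarrow> Q = Q' \<Longrightarrow> hasD P' Q' x e"
proof -
  assume "hasD P Q x e" "\<And>z. P z = P' z" "Q = Q'"
  moreover have "P = P'" using \<open>\<And>z. P z = P' z\<close> by auto
  ultimately show ?thesis by simp
qed

lemma hasD_const: "hasD (\<lambda>z. c) 0 x e"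
  unfolding hasD_def by simp

lemma hasD_prod:
  assumes "finite S" "\<And>y. y \<in> S \<Longrightarrow> hasD (P y) (P y x * W y) x e"
  shows "hasD (\<lambda>z. \<Prod>y\<in>S. P y z) ((\<Prod>y\<in>S. P y x) * (\<Sum>y\<in>S. W y)) x e"
  using assms
proof (induction S rule: finite_induct)
  case empty
  then show ?case using hasD_const[of 1 x e] by simp
next
  case (insert a S)
  have "hasD (\<lambda>z. P a z * (\<Prod>y\<in>S. P y z)) (P a x * W a * (\<Prod>y\<in>S. P y x) + P a x * ((\<Prod>y\<in>S. P y x) * (\<Sum>y\<in>S. W y))) x e"
    by (rule hasD_mult) (use insert in auto)
  then show ?case
    by (rule hasD_cong) (use insert in \<open>simp_all add: algebra_simps\<close>)
qed

lemma hasD_partial: "hasD P Q x (axis i 1) \<Longrightarrow> partial i (\<lambda>z. fps_nth (P z) n) x = fps_nth Q n"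
  unfolding partial_def hasD_def by (blast intro: DERIV_imp_deriv)

lemma hasD_B: "hasD (\<lambda>z. binom_series k (inner z y))
   (fps_const (k * inner e y) * fps_X * binom_series k (inner x y) * G (inner x y)) x e"
  unfolding hasD_def
  using B_dc[of k "inner x y" "inner e y"] by (simp add: inner_add_left algebra_simps)

lemma hasD_G: "hasD (\<lambda>z. G (inner z y))
   (fps_const (inner e y) * fps_X * G (inner x y) * G (inner x y)) x e"
  unfolding hasD_def
  using G_dc[of "inner x y" "inner e y"] by (simp add: inner_add_left algebra_simps)

lemma inner_refl: "inner (refl v x) y = inner x (refl v y)"
  unfolding refl_def by (simp add: inner_diff_left inner_diff_right inner_commute algebra_simps)

lemma refl_diff: "y - refl v y = (2 * inner y v / (norm v)\<^sup>2) *\<^sub>R v"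
  unfolding refl_def by simp

definition Hs :: "real \<Rightarrow> real^3 \<Rightarrow> real fps" where
  "Hs k x = (\<Prod>y\<in>Ico. binom_series k (inner x y))"

lemma Fser_eq: "Fser k y0 z = G (inner z y0) * Hs k z"
  by (simp add: Fser_def G_def Hs_def)

lemma H_refl: assumes "v \<in> Rplus" shows "Hs k (refl v x) = Hs k x"
proof -
  have inj: "inj_on (refl v) Ico"
    by (rule eq_card_imp_inj_on[OF finite_Ico]) (simp add: refl_Ico[OF assms])
  have "Hs k (refl v x) = (\<Prod>y\<in>Ico. binom_series k (inner x (refl v y)))"
    by (simp add: Hs_def inner_refl)
  also have "\<dots> = (\<Prod>y\<in>refl v ` Ico. binom_series k (inner x y))"
    by (simp add: prod.reindex[OF inj])
  also have "\<dots> = Hs k x" by (simp add: refl_Ico[OF assms] Hs_def)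
  finally show ?thesis .
qed

lemma neg_pow: "(-1::real)^n * (-c)^n = c^n"
  by (simp add: power_mult_distrib[symmetric])

lemma B_comp: "binom_series k c oo (- fps_X) = binom_series k (-c)"
  by (rule fps_ext) (simp add: fps_compose_uminus' B_nth neg_pow mult.assoc[symmetric])

lemma G_comp: "G c oo (- fps_X) = G (-c)"
  by (rule fps_ext) (simp add: fps_compose_uminus' G_nth power_minus[of c])

lemma H_comp: "Hs k x oo (- fps_X) = Hs k x"
proof -
  have "Hs k x oo (- fps_X) = (\<Prod>y\<in>Ico. binom_series k (inner x (- y)))"
    unfolding Hs_def by (simp add: fps_compose_prod_distrib B_comp)
  also have "\<dots> = (\<Prod>y\<in>uminus ` Ico. binom_series k (inner x y))"
    by (simp add: prod.reindex)
  also have "\<dots> = Hs k x" by (simp add: uminus_Ico Hs_def)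
  finally show ?thesis .
qed

lemma deriv_prod:
  assumes "finite S" "\<And>y. y \<in> S \<Longrightarrow> fps_deriv (P y) = P y * W y"
  shows "fps_deriv (\<Prod>y\<in>S. P y) = (\<Prod>y\<in>S. P y) * (\<Sum>y\<in>S. W y)"
  using assms
  by (induction S rule: finite_induct) (simp_all add: algebra_simps)

lemma G_deriv: "fps_deriv (G c) = fps_const c * G c * G c"
  unfolding G_def by (subst fps_inverse_deriv) (simp_all add: power2_eq_square)

lemma H_deriv: "fps_deriv (Hs k x) = Hs k x * (fps_const k * (\<Sum>y\<in>Ico. fps_const (inner x y) * G (inner x y)))"
proof -
  have "fps_deriv (Hs k x) = Hs k x * (\<Sum>y\<in>Ico. fps_const k * (fps_const (inner x y) * G (inner x y)))"
    unfolding Hs_def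
    by (rule deriv_prod[OF finite_Ico]) (simp add: B_deriv algebra_simps)
  then show ?thesis by (simp add: sum_distrib_left)
qed

lemma G_diff: "G a - G b = fps_const (a - b) * fps_X * G a * G b"
  using G_mult[of a] G_mult[of b] by (simp add: fps_const_sub[symmetric] del: fps_const_sub) algebra

lemma hasD_F: "hasD (Fser k y0)
  (fps_X * G (inner x y0) * Hs k x * (fps_const (inner e y0) * G (inner x y0)
     + fps_const k * (\<Sum>y\<in>Ico. fps_const (inner e y) * G (inner x y)))) x e"
proof -
  have hp: "hasD (\<lambda>z. \<Prod>y\<in>Ico. binom_series k (inner z y))
     ((\<Prod>y\<in>Ico. binom_series k (inner x y)) * (\<Sum>y\<in>Ico. fps_const k * fps_X * (fps_const (inner e y) * G (inner x y)))) x e"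
    by (rule hasD_prod[OF finite_Ico], rule hasD_cong[OF hasD_B])
      (simp_all add: algebra_simps fps_const_mult[symmetric] del: fps_const_mult)
  have "hasD (\<lambda>z. G (inner z y0) * (\<Prod>y\<in>Ico. binom_series k (inner z y)))
     (fps_const (inner e y0) * fps_X * G (inner x y0) * G (inner x y0) * (\<Prod>y\<in>Ico. binom_series k (inner x y))
      + G (inner x y0) * ((\<Prod>y\<in>Ico. binom_series k (inner x y)) * (\<Sum>y\<in>Ico. fps_const k * fps_X * (fps_const (inner e y) * G (inner x y))))) x e"
    by (rule hasD_mult[OF hasD_G hp])
  then show ?thesis
    by (rule hasD_cong) (simp_all add: Fser_eq Hs_def sum_distrib_left[symmetric] algebra_simps)
qed


lemma fps_const_sum': "fps_const (\<Sum>i\<in>S. f i) = (\<Sum>i\<in>S. fps_const (f i))"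
  by (rule fps_ext) (simp add: fps_sum_nth)

lemma lin3: "(\<Sum>i\<in>UNIV. fps_const (u$i) * fps_const (inner (axis i 1) y)) = fps_const (inner u (y::real^3))"
  by (simp only: inner_axis') (simp add: inner_vec_def fps_const_sum')

lemma aux_sum: "(\<Sum>i\<in>UNIV. d / w * (u$i * v$i)) = inner u v / w * (d::real)"
proof -
  have "(\<Sum>i\<in>UNIV. d / w * (u$i * v$i)) = d / w * (\<Sum>i\<in>UNIV. u$i * v$i)"
    by (simp only: sum_distrib_left)
  then show ?thesis by (simp add: inner_vec_def)
qed

theorem mainTheorem1:
  fixes \<kappa> :: real and u y0 x :: "real^3"
  assumes "\<kappa> \<ge> 0"
    and "y0 \<in> Ico"
    and "\<forall>v\<in>Rplus. inner x v \<noteq> 0"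
  shows "Abs_fps (\<lambda>n. \<Sum>i\<in>UNIV. u $ i * Dunkl \<kappa> i (\<lambda>z. fps_nth (Fser \<kappa> y0 z) n) x)
       = fps_const (inner u y0) *
           (fps_X\<^sup>2 * fps_deriv (Fser \<kappa> y0 x)
            + fps_const (1 + 11 * \<kappa>) * fps_X * Fser \<kappa> y0 x
            - fps_const \<kappa> * fps_X * (Fser \<kappa> y0 x oo (- fps_X)))"
proof -
  define a0 where "a0 = inner x y0"
  define g where "g = G a0"
  define gm where "gm = G (-a0)"
  define H where "H = Hs \<kappa> x"
  define Sg where "Sg = (\<Sum>y\<in>Ico. G (inner x y))"
  define Su where "Su = (\<Sum>y\<in>Ico. fps_const (inner u y) * G (inner x y))"
  define Sa where "Sa = (\<Sum>y\<in>Ico. fps_const (inner x y) * G (inner x y))"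
  define Q where "Q e = fps_X * g * H * (fps_const (inner e y0) * g + fps_const \<kappa> * (\<Sum>y\<in>Ico. fps_const (inner e y) * G (inner x y)))" for e
  define T where "T v = fps_const (inner u v / inner x v) * (Fser \<kappa> y0 x - Fser \<kappa> y0 (refl v x))" for v
  have part: "partial i (\<lambda>z. fps_nth (Fser \<kappa> y0 z) n) x = fps_nth (Q (axis i 1)) n" for i n
    using hasD_partial[OF hasD_F] unfolding Q_def g_def H_def a0_def by blast
  have L1: "Abs_fps (\<lambda>n. \<Sum>i\<in>UNIV. u $ i * Dunkl \<kappa> i (\<lambda>z. fps_nth (Fser \<kappa> y0 z) n) x)
     = (\<Sum>i\<in>UNIV. fps_const (u$i) * Q (axis i 1)) + fps_const \<kappa> * (\<Sum>v\<in>Rplus. T v)"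
  proof (rule fps_ext)
    fix n
    let ?d = "\<lambda>v. fps_nth (Fser \<kappa> y0 x) n - fps_nth (Fser \<kappa> y0 (refl v x)) n"
    have e1: "(\<Sum>i\<in>UNIV. u $ i * Dunkl \<kappa> i (\<lambda>z. fps_nth (Fser \<kappa> y0 z) n) x)
       = (\<Sum>i\<in>UNIV. u$i * fps_nth (Q (axis i 1)) n) + \<kappa> * (\<Sum>i\<in>UNIV. u$i * (\<Sum>v\<in>Rplus. ?d v / inner x v * v$i))"
      unfolding Dunkl_def part by (simp add: algebra_simps sum.distrib sum_distrib_left)
    have e2: "(\<Sum>i\<in>UNIV. u$i * (\<Sum>v\<in>Rplus. ?d v / inner x v * v$i)) = (\<Sum>v\<in>Rplus. inner u v / inner x v * ?d v)"
    proof -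
      have "(\<Sum>i\<in>UNIV. u$i * (\<Sum>v\<in>Rplus. ?d v / inner x v * v$i)) = (\<Sum>i\<in>UNIV. \<Sum>v\<in>Rplus. ?d v / inner x v * (u$i * v$i))"
        by (simp add: sum_distrib_left algebra_simps)
      also have "\<dots> = (\<Sum>v\<in>Rplus. \<Sum>i\<in>UNIV. ?d v / inner x v * (u$i * v$i))"
        by (rule sum.swap)
      also have "\<dots> = (\<Sum>v\<in>Rplus. inner u v / inner x v * ?d v)"
        by (simp only: aux_sum)
      finally show ?thesis .
    qed
    show "fps_nth (Abs_fps (\<lambda>n. \<Sum>i\<in>UNIV. u $ i * Dunkl \<kappa> i (\<lambda>z. fps_nth (Fser \<kappa> y0 z) n) x)) n
      = fps_nth ((\<Sum>i\<in>UNIV. fps_const (u$i) * Q (axis i 1)) + fps_const \<kappa> * (\<Sum>v\<in>Rplus. T v)) n"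
      unfolding fps_nth_Abs_fps e1 e2 by (simp add: fps_sum_nth T_def)
  qed
  have L2: "(\<Sum>i\<in>UNIV. fps_const (u$i) * Q (axis i 1)) = Q u"
  proof -
    have "(\<Sum>i\<in>UNIV. fps_const (u$i) * Q (axis i 1))
      = fps_X * g * H * (g * (\<Sum>i\<in>UNIV. fps_const (u$i) * fps_const (inner (axis i 1) y0))
          + fps_const \<kappa> * (\<Sum>y\<in>Ico. G (inner x y) * (\<Sum>i\<in>UNIV. fps_const (u$i) * fps_const (inner (axis i 1) y))))"
      unfolding Q_def
      by (simp add: sum_distrib_left sum.distrib algebra_simps sum.swap[of _ UNIV Ico] del: fps_const_mult)
    then show ?thesis unfolding lin3 Q_def by (simp add: algebra_simps)
  qed
  define h where "h y = fps_const (inner u (y0 - y)) * G (inner x y)" for y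
  have T_eq: "T v = fps_X * g * H * h (refl v y0)" if v: "v \<in> Rplus" for v
  proof -
    define b where "b = inner x (refl v y0)"
    define c where "c = 2 * inner y0 v / (norm v)\<^sup>2"
    have nz: "inner x v \<noteq> 0" using assms(3) v by blast
    have F2: "Fser \<kappa> y0 (refl v x) = G b * H"
      unfolding Fser_eq b_def H_def H_refl[OF v] inner_refl ..
    have ab: "a0 - b = c * inner x v"
      unfolding a0_def b_def c_def using refl_diff[of y0 v]
      by (metis inner_diff_right inner_scaleR_right)
    have uv: "inner u (y0 - refl v y0) = c * inner u v"
      unfolding c_def using refl_diff[of y0 v] by simp
    have "T v = fps_const (inner u v / inner x v) * (g * H - G b * H)"
      unfolding T_def F2 by (simp add: Fser_eq g_def H_def a0_def)
    also have "g * H - G b * H = fps_const (a0 - b) * fps_X * g * G b * H"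
      unfolding g_def using G_diff[of a0 b] by algebra
    finally have "T v = fps_const (inner u v / inner x v) * fps_const (a0 - b) * fps_X * g * G b * H"
      by (simp add: algebra_simps del: fps_const_mult fps_const_sub)
    also have "fps_const (inner u v / inner x v) * fps_const (a0 - b) = fps_const (inner u (y0 - refl v y0))"
      unfolding ab uv using nz by simp
    finally show ?thesis unfolding h_def b_def by (simp add: algebra_simps)
  qed
  have S: "(\<Sum>v\<in>Rplus. T v) = fps_X * g * H * (fps_const (inner u y0) * Sg - Su - 2 * fps_const (inner u y0) * gm)"
  proof -
    have "(\<Sum>v\<in>Rplus. T v) = fps_X * g * H * (\<Sum>v\<in>Rplus. h (refl v y0))"
      by (simp add: T_eq sum_distrib_left)
    also have "(\<Sum>v\<in>Rplus. h (refl v y0)) = 5 * h y0 + (\<Sum>y\<in>Ico. h y) - h y0 - h (-y0)"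
      by (rule sum_refl[OF assms(2)])
    also have "h y0 = 0" by (simp add: h_def)
    also have "h (-y0) = 2 * fps_const (inner u y0) * gm"
    proof -
      have e: "inner u (y0 - - y0) = 2 * inner u y0"
        by (simp only: diff_minus_eq_add inner_add_right mult_2)
      show ?thesis unfolding h_def e
        by (simp add: gm_def a0_def fps_const_mult[symmetric] del: fps_const_mult)
    qed
    also have "(\<Sum>y\<in>Ico. h y) = fps_const (inner u y0) * Sg - Su"
    proof -
      have "(\<Sum>y\<in>Ico. h y) = (\<Sum>y\<in>Ico. fps_const (inner u y0) * G (inner x y) - fps_const (inner u y) * G (inner x y))"
        by (rule sum.cong[OF refl]) (simp add: h_def inner_diff_right algebra_simps fps_const_sub[symmetric] del: fps_const_sub)
      also have "\<dots> = fps_const (inner u y0) * Sg - Su"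
        by (simp add: sum_subtractf sum_distrib_left Sg_def Su_def)
      finally show ?thesis .
    qed
    finally show ?thesis by simp
  qed
  have Fx: "Fser \<kappa> y0 x = g * H" by (simp add: Fser_eq g_def H_def a0_def)
  have dF: "fps_deriv (Fser \<kappa> y0 x) = fps_const a0 * g * g * H + g * (H * (fps_const \<kappa> * Sa))"
    unfolding Fx g_def H_def Sa_def by (simp add: G_deriv H_deriv)
  have cF: "Fser \<kappa> y0 x oo (- fps_X) = gm * H"
    unfolding Fx g_def gm_def H_def by (simp add: fps_compose_mult_distrib G_comp H_comp)
  have r1: "g * (1 - fps_const a0 * fps_X) = 1" unfolding g_def by (rule G_mult)
  have r2: "gm * (1 + fps_const a0 * fps_X) = 1" using G_mult[of "-a0"] unfolding gm_def by (simp add: fps_const_neg[symmetric] del: fps_const_neg)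
  have r3: "fps_X * Sa = Sg - 12"
  proof -
    have "fps_X * Sa = (\<Sum>y\<in>Ico. G (inner x y) - 1)"
      unfolding Sa_def sum_distrib_left
      by (rule sum.cong[OF refl]) (use G_mult in \<open>simp add: algebra_simps\<close>)
    also have "\<dots> = Sg - 12" by (simp add: sum_subtractf Sg_def card_Ico)
    finally show ?thesis .
  qed
  have c1: "fps_const (1 + 11 * \<kappa>) = 1 + 11 * fps_const \<kappa>"
    by (simp add: fps_const_add[symmetric] fps_const_mult[symmetric] del: fps_const_add fps_const_mult)
  show ?thesis
    unfolding L1 L2 S dF cF c1
    unfolding Fx Q_def Su_def[symmetric] Sg_def[symmetric]
    using r1 r2 r3 by algebra
qed

end
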